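(* Let $h$ and $k$ be relatively prime odd integers with $k>0$. Then $$B_{1}(h,k)=\frac{h}{4k}\,Y(h,k)+\frac{1}{2k}-\frac{1}{2}.$$
   Context: $[x]$ denotes the greatest integer $\le x$, and $((x))=x-[x]-\tfrac12$ if $x\notin\mathbb{Z}$, $((x))=0$ if $x\in\mathbb{Z}$. For integers $h,k$ with $k>0$, $\gcd(h,k)=1$: $$B_{1}(h,k)=\sum_{j=1}^{k-1}(-1)^{j+\left[\frac{hj}{k}\right]}\left[\frac{hj}{k}\right],\qquad Y(h,k)=4k\sum_{j \bmod k}(-1)^{j+\left[\frac{hj}{k}\right]}\left(\left(\frac{j}{k}\right)\right),$$ the latter sum over a complete residue system modulo $k$ (the Simsek sum). *)

theory Defs
  imports Complex_Main
begin

definition sawtooth :: "real \<Rightarrow> real" where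
  "sawtooth x = (if x \<in> \<int> then 0 else x - of_int \<lfloor>x\<rfloor> - 1/2)"

definition B1 :: "int \<Rightarrow> int \<Rightarrow> real" where
  "B1 h k = (\<Sum>j\<in>{1..k-1}.
      (-1::real) powi (j + \<lfloor>real_of_int (h*j) / real_of_int k\<rfloor>)
      * of_int \<lfloor>real_of_int (h*j) / real_of_int k\<rfloor>)"

definition Y :: "int \<Rightarrow> int \<Rightarrow> real" where
  "Y h k = 4 * of_int k * (\<Sum>j\<in>{0..k-1}.
      (-1::real) powi (j + \<lfloor>real_of_int (h*j) / real_of_int k\<rfloor>)
      * sawtooth (real_of_int j / real_of_int k))"

end

theory Submission
  imports Defs
begin

lemma sg_eq: "(-1::real) powi n = (if even n then 1 else -1)"
proof (cases "n \<ge> 0")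
  case True
  then obtain m where "n = int m" using nonneg_int_cases by blast
  then show ?thesis by (simp add: power_int_of_nat)
next
  case False
  then obtain m where m0: "-n = int m" using nonneg_int_cases[of "-n"] by force
  hence m: "n = - int m" by simp
  have "(-1::real) powi n = (-1) powi (int m)" using m power_int_minus_one_minus by metis
  then show ?thesis using m by (simp add: power_int_of_nat)
qed

lemma alt_sums:
  "(\<Sum>r\<in>{1..2*int m}. (-1::real) powi r) = 0 \<and>
   (\<Sum>r\<in>{1..2*int m}. (-1::real) powi r * of_int r) = of_nat m"
proof (induction m)
  case 0
  then show ?case by simp
next
  case (Suc m)
  have eq: "{1..2*int (Suc m)} = insert (2*int m + 2) (insert (2*int m+1) {1..2*int m})"
    by auto
  have a: "(-1::real) powi (2*int m + 2) = 1" by (simp add: sg_eq)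
  have b: "(-1::real) powi (2*int m + 1) = -1" by (simp add: sg_eq)
  show ?case using Suc a b unfolding eq by simp
qed

theorem theorem13:
  fixes h k :: int
  assumes "coprime h k" and "odd h" and "odd k" and "k > 0"
  shows "B1 h k = real_of_int h / (4 * real_of_int k) * Y h k
                  + 1 / (2 * real_of_int k) - 1/2"
proof -
  define I where "I = {1..k-1}"
  define r where "r j = (h*j) mod k" for j
  define s where "s j = (-1::real) powi (r j)" for j
  have fl: "\<lfloor>real_of_int (h*j) / real_of_int k\<rfloor> = (h*j) div k" for j
    by (metis floor_divide_of_int_eq of_int_mult)
  have sgn: "(-1::real) powi (j + (h*j) div k) = s j" for j
  proof -
    have "h*j = k * ((h*j) div k) + r j" unfolding r_def by simp
    moreover have "even (h*j) = even j" using assms(2) by simp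
    moreover have "even (k * ((h*j) div k)) = even ((h*j) div k)" using assms(3) by simp
    ultimately have "even (j + (h*j) div k) = even (r j)" by (metis even_add)
    thus ?thesis unfolding s_def sg_eq by simp
  qed
  have B: "B1 h k = (\<Sum>j\<in>I. s j * ((of_int h * of_int j - of_int (r j)) / of_int k))"
  proof -
    have "of_int ((h*j) div k) = (of_int h * of_int j - of_int (r j)) / (of_int k::real)" for j
    proof -
      have e: "h*j = k * ((h*j) div k) + r j" unfolding r_def by simp
      have "real_of_int (h*j) = of_int k * of_int ((h*j) div k) + of_int (r j)" using arg_cong[OF e, of real_of_int] by simp
      thus ?thesis using assms(4) by (simp add: field_simps)
    qed
    thus ?thesis unfolding B1_def I_def fl sgn by simp
  qed
  have saw: "sawtooth (real_of_int j / real_of_int k) = real_of_int j / real_of_int k - 1/2" if "j \<in> I" for j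
  proof -
    have "0 < real_of_int j / real_of_int k" "real_of_int j / real_of_int k < 1"
      using that assms(4) unfolding I_def by auto
    hence "real_of_int j / real_of_int k \<notin> \<int>" "\<lfloor>real_of_int j / real_of_int k\<rfloor> = 0"
      by (auto simp: Ints_def floor_eq_iff)
    thus ?thesis unfolding sawtooth_def by simp
  qed
  have Ysum: "Y h k = 4 * of_int k * (\<Sum>j\<in>I. s j * (of_int j / of_int k - 1/2))"
  proof -
    have "{0..k-1} = insert 0 I" unfolding I_def using assms(4) by auto
    moreover have "0 \<notin> I" unfolding I_def by auto
    ultimately have "(\<Sum>j\<in>{0..k-1}. (-1::real) powi (j + \<lfloor>real_of_int (h*j) / real_of_int k\<rfloor>)
      * sawtooth (real_of_int j / real_of_int k)) = (\<Sum>j\<in>I. s j * (of_int j / of_int k - 1/2))"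
      apply (simp only:)
      apply (subst sum.insert, simp add: I_def, simp)
      apply (subst sum.cong[OF refl, of I _ "\<lambda>j. s j * (of_int j / of_int k - 1/2)"])
       apply (simp only: fl sgn saw)
      apply (simp add: sawtooth_def)
      done
    thus ?thesis unfolding Y_def by simp
  qed
  have ckh: "coprime k h" using assms(1) by (simp add: ac_simps)
  have injr: "inj_on r I"
  proof
    fix i j assume ij: "i \<in> I" "j \<in> I" "r i = r j"
    hence "k dvd h*i - h*j" unfolding r_def by (simp add: mod_eq_dvd_iff)
    hence "k dvd h*(i-j)" by (simp add: right_diff_distrib)
    hence "k dvd i - j" using coprime_dvd_mult_right_iff[OF ckh] by blast
    moreover have "\<bar>i - j\<bar> < k" using ij(1,2) unfolding I_def by auto
    ultimately have "i - j = 0" using dvd_imp_le_int[of "i-j" k] by force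
    thus "i = j" by simp
  qed
  have bij: "r ` I = I"
  proof (rule endo_inj_surj)
    show "finite I" unfolding I_def by simp
    show "r ` I \<subseteq> I"
    proof
      fix x assume "x \<in> r ` I"
      then obtain j where j: "j \<in> I" "x = r j" by auto
      have "x \<noteq> 0"
      proof
        assume "x = 0"
        hence "k dvd h*j" using j unfolding r_def by auto
        hence "k dvd j" using coprime_dvd_mult_right_iff[OF ckh] by blast
        thus False using j unfolding I_def using zdvd_imp_le by fastforce
      qed
      moreover have "0 \<le> x" "x < k" using j assms(4) unfolding r_def by auto
      ultimately show "x \<in> I" unfolding I_def by auto
    qed
    show "inj_on r I" by (rule injr)
  qed
  obtain t where t: "k = 2*t + 1" using assms(3) oddE by blast
  hence "t \<ge> 0" using assms(4) by simp
  then obtain m where "t = int m" using nonneg_int_cases by blast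
  hence m: "k - 1 = 2 * int m" using t by simp
  have S0: "(\<Sum>j\<in>I. s j) = 0"
  proof -
    have "(\<Sum>j\<in>I. s j) = (\<Sum>x\<in>r ` I. (-1::real) powi x)"
      unfolding s_def using sum.reindex[OF injr, of "\<lambda>x. (-1::real) powi x"] by simp
    also have "\<dots> = 0" using bij alt_sums[of m] m unfolding I_def by simp
    finally show ?thesis .
  qed
  have S1: "(\<Sum>j\<in>I. s j * of_int (r j)) = of_nat m"
  proof -
    have "(\<Sum>j\<in>I. s j * of_int (r j)) = (\<Sum>x\<in>r ` I. (-1::real) powi x * of_int x)"
      unfolding s_def using sum.reindex[OF injr, of "\<lambda>x. (-1::real) powi x * of_int x"] by simp
    also have "\<dots> = of_nat m" using bij alt_sums[of m] m unfolding I_def by simp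
    finally show ?thesis .
  qed
  define A where "A = (\<Sum>j\<in>I. s j * of_int j)"
  have B2: "B1 h k = of_int h / of_int k * A - of_nat m / of_int k"
    unfolding B A_def using S1
    by (simp add: sum_divide_distrib[symmetric] sum_distrib_left diff_divide_distrib right_diff_distrib sum_subtractf field_simps)
  have "(\<Sum>j\<in>I. s j * (of_int j / of_int k - 1/2)) = (\<Sum>j\<in>I. s j * of_int j / of_int k - 1/2 * s j)"
    by (rule sum.cong) (auto simp: algebra_simps)
  also have "\<dots> = A / of_int k - 1/2 * (\<Sum>j\<in>I. s j)"
    unfolding A_def by (simp add: sum_subtractf sum_divide_distrib sum_distrib_left)
  finally have Y2: "Y h k = 4 * of_int k * (A / of_int k - 1/2 * (\<Sum>j\<in>I. s j))"
    unfolding Ysum by simp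
  have km: "real_of_int k = 2 * of_nat m + 1" using arg_cong[OF m, of real_of_int] by simp
  have kne: "real_of_int k \<noteq> 0" using assms(4) by simp
  have e1: "real_of_int h / (4 * real_of_int k) * (4 * of_int k * (A / of_int k - 1/2 * 0)) = of_int h / of_int k * A"
    using kne by (simp add: field_simps)
  have e2: "1 / (2 * real_of_int k) - 1/2 = - (of_nat m / of_int k)"
    using kne km by (simp add: field_simps)
  show ?thesis unfolding B2 Y2 S0 e1 using e2 by simp
qed

end
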